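(* Let $p\ge7$ be prime, let $L/K$ be a finite cyclic Galois extension of number fields, and let $\overline r:G_L\to\mathrm{PGL}_2(\mathbb{F}_p)$ be a continuous homomorphism with cyclotomic determinant. Then $\overline r$ extends to a homomorphism $\overline R:G_K\to\mathrm{PGL}_2(\mathbb{F}_p)$ (i.e. $\overline R|_{G_L}=\overline r$) if and only if $\overline r$ is compatible with $L/K$. Moreover, $\overline r$ admits such an extension $\overline R$ with cyclotomic determinant if and only if $\overline r$ is strongly compatible with $L/K$.
   Context: $G_K=\mathrm{Gal}(\overline{\mathbb{Q}}/K)$. Let $\overline\varepsilon_p^{\mathrm{pr}}:G_{\mathbb{Q}}\to\mathbb{F}_p^\times/\mathbb{F}_p^{\times2}$ be the mod-$p$ cyclotomic character composed with the quotient map; determinants on $\mathrm{PGL}_2(\mathbb{F}_p)$ take values in $\mathbb{F}_p^\times/\mathbb{F}_p^{\times2}$. A homomorphism $\overline\rho:G_L\to\mathrm{PGL}_2(\mathbb{F}_p)$ has cyclotomic determinant if $\det\overline\rho(\sigma)=\overline\varepsilon_p^{\mathrm{pr}}(\sigma)$ for all $\sigma$. For $K\subseteq L$, $\overline\rho$ is invariant with respect to $L/K$ if for every $\tau\in G_K$ there is $g_\tau\in\mathrm{PGL}_2(\mathbb{F}_p)$ with $\overline\rho(\tau\sigma\tau^{-1})=g_\tau\overline\rho(\sigma)g_\tau^{-1}$ for all $\sigma\in G_L$; strongly invariant if moreover the $g_\tau$ can be chosen with $\det g_\tau=\overline\varepsilon_p^{\mathrm{pr}}(\tau)$. It is (strongly)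 compatible with $L/K$ if it is (strongly) invariant with the $g_\tau$ additionally satisfying $\overline\rho(\tau^{d})=g_\tau^{d}$ for all $\tau\in G_K$, where $d=d_\tau$ is the least positive integer with $\tau^d\in G_L$. *)

theory Defs
  imports "HOL-Algebra.Algebraic_Closure_Type" "HOL-Algebra.Group" "HOL-Number_Theory.Number_Theory"
begin

type_synonym qbar = "rat alg_closure"

definition is_subfield :: "qbar set \<Rightarrow> bool" where
  "is_subfield K \<longleftrightarrow> 0 \<in> K \<and> 1 \<in> K \<and> (\<forall>x\<in>K. \<forall>y\<in>K. x + y \<in> K \<and> x * y \<in> K)
     \<and> (\<forall>x\<in>K. - x \<in> K \<and> inverse x \<in> K)"

definition number_field :: "qbar set \<Rightarrow> bool" where
  "number_field K \<longleftrightarrow> is_subfield K \<and>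
     (\<exists>B. finite B \<and> B \<subseteq> K \<and> (\<forall>x\<in>K. \<exists>c::qbar \<Rightarrow> rat. x = (\<Sum>b\<in>B. of_rat (c b) * b)))"

definition field_aut :: "(qbar \<Rightarrow> qbar) \<Rightarrow> bool" where
  "field_aut \<sigma> \<longleftrightarrow> bij \<sigma> \<and> (\<forall>x y. \<sigma> (x + y) = \<sigma> x + \<sigma> y) \<and>
     (\<forall>x y. \<sigma> (x * y) = \<sigma> x * \<sigma> y) \<and> \<sigma> 1 = 1"

definition absGal :: "qbar set \<Rightarrow> (qbar \<Rightarrow> qbar) set" where
  "absGal K = {\<sigma>. field_aut \<sigma> \<and> (\<forall>x\<in>K. \<sigma> x = x)}"

definition GalGrp :: "qbar set \<Rightarrow> (qbar \<Rightarrow> qbar) monoid" where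
  "GalGrp K = \<lparr>carrier = absGal K, monoid.mult = (\<circ>), one = id\<rparr>"

definition cyclic_galois_ext :: "qbar set \<Rightarrow> qbar set \<Rightarrow> bool" where
  "cyclic_galois_ext L K \<longleftrightarrow> number_field K \<and> number_field L \<and> K \<subseteq> L \<and>
     (\<forall>\<sigma>\<in>absGal K. \<sigma> ` L = L) \<and>
     (\<exists>\<tau>0\<in>absGal K. \<forall>\<sigma>\<in>absGal K. \<exists>n. \<forall>x\<in>L. \<sigma> x = (\<tau>0 ^^ n) x)"

text \<open>PGL_2(F_p): 2x2 matrices (a,b,c,d) = [[a,b],[c,d]] with entries in {0..<p},
  invertible mod p, modulo nonzero scalars; elements are the scalar classes.\<close>
type_synonym mat2 = "int \<times> int \<times> int \<times> int"

definition mdet :: "mat2 \<Rightarrow> int" where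
  "mdet A = (case A of (a,b,c,d) \<Rightarrow> a * d - b * c)"

definition mmul :: "nat \<Rightarrow> mat2 \<Rightarrow> mat2 \<Rightarrow> mat2" where
  "mmul p A B = (case A of (a,b,c,d) \<Rightarrow> case B of (e,f,g,h) \<Rightarrow>
     ((a*e + b*g) mod int p, (a*f + b*h) mod int p, (c*e + d*g) mod int p, (c*f + d*h) mod int p))"

definition msmul :: "nat \<Rightarrow> int \<Rightarrow> mat2 \<Rightarrow> mat2" where
  "msmul p l A = (case A of (a,b,c,d) \<Rightarrow>
     ((l*a) mod int p, (l*b) mod int p, (l*c) mod int p, (l*d) mod int p))"

definition gl2 :: "nat \<Rightarrow> mat2 set" where
  "gl2 p = {(a,b,c,d). a \<in> {0..<int p} \<and> b \<in> {0..<int p} \<and> c \<in> {0..<int p} \<and> d \<in> {0..<int p}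
              \<and> \<not> int p dvd (a*d - b*c)}"

definition pcls :: "nat \<Rightarrow> mat2 \<Rightarrow> mat2 set" where
  "pcls p A = {B \<in> gl2 p. \<exists>l. \<not> int p dvd l \<and> B = msmul p l A}"

definition PGL2 :: "nat \<Rightarrow> mat2 set monoid" where
  "PGL2 p = \<lparr>carrier = pcls p ` gl2 p,
     monoid.mult = (\<lambda>U V. pcls p (mmul p (SOME M1. M1 \<in> U) (SOME M2. M2 \<in> V))),
     one = pcls p (1, 0, 0, 1)\<rparr>"

text \<open>Determinant PGL_2(F_p) \<rightarrow> F_p^*/F_p^*2, the latter identified with {1,-1}
  via the Legendre symbol.\<close>
definition pdet :: "nat \<Rightarrow> mat2 set \<Rightarrow> int" where
  "pdet p U = Legendre (mdet (SOME M. M \<in> U)) (int p)"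

text \<open>Mod-p cyclotomic character composed with F_p^* \<rightarrow> F_p^*/F_p^*2:
  \<sigma>(\<zeta>) = \<zeta>^a for all p-th roots of unity \<zeta>.\<close>
definition cyc_pr :: "nat \<Rightarrow> (qbar \<Rightarrow> qbar) \<Rightarrow> int" where
  "cyc_pr p \<sigma> = Legendre (int (SOME a::nat. \<forall>\<zeta>::qbar. \<zeta> ^ p = 1 \<longrightarrow> \<sigma> \<zeta> = \<zeta> ^ a)) (int p)"

definition cyc_det :: "nat \<Rightarrow> qbar set \<Rightarrow> ((qbar \<Rightarrow> qbar) \<Rightarrow> mat2 set) \<Rightarrow> bool" where
  "cyc_det p L r \<longleftrightarrow> (\<forall>\<sigma>\<in>absGal L. pdet p (r \<sigma>) = cyc_pr p \<sigma>)"

text \<open>Continuity for the Krull topology on G_L and the discrete topology on PGL_2(F_p):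
  the kernel contains an open subgroup G_M, M a number field containing L.\<close>
definition galois_continuous :: "nat \<Rightarrow> qbar set \<Rightarrow> ((qbar \<Rightarrow> qbar) \<Rightarrow> mat2 set) \<Rightarrow> bool" where
  "galois_continuous p L r \<longleftrightarrow>
     (\<exists>M. number_field M \<and> L \<subseteq> M \<and> (\<forall>\<sigma>\<in>absGal M. r \<sigma> = \<one>\<^bsub>PGL2 p\<^esub>))"

definition dtau :: "qbar set \<Rightarrow> (qbar \<Rightarrow> qbar) \<Rightarrow> nat" where
  "dtau L \<tau> = (LEAST d. 0 < d \<and> \<tau> ^^ d \<in> absGal L)"

definition invariant_wrt :: "nat \<Rightarrow> qbar set \<Rightarrow> qbar set \<Rightarrow> ((qbar \<Rightarrow> qbar) \<Rightarrow> mat2 set) \<Rightarrow> bool" where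
  "invariant_wrt p L K r \<longleftrightarrow> (\<forall>\<tau>\<in>absGal K. \<exists>g\<in>carrier (PGL2 p). \<forall>\<sigma>\<in>absGal L.
      r (\<tau> \<circ> \<sigma> \<circ> inv_into UNIV \<tau>) = g \<otimes>\<^bsub>PGL2 p\<^esub> r \<sigma> \<otimes>\<^bsub>PGL2 p\<^esub> inv\<^bsub>PGL2 p\<^esub> g)"

definition compatible_wrt :: "nat \<Rightarrow> qbar set \<Rightarrow> qbar set \<Rightarrow> ((qbar \<Rightarrow> qbar) \<Rightarrow> mat2 set) \<Rightarrow> bool" where
  "compatible_wrt p L K r \<longleftrightarrow> (\<forall>\<tau>\<in>absGal K. \<exists>g\<in>carrier (PGL2 p).
      (\<forall>\<sigma>\<in>absGal L. r (\<tau> \<circ> \<sigma> \<circ> inv_into UNIV \<tau>) = g \<otimes>\<^bsub>PGL2 p\<^esub> r \<sigma> \<otimes>\<^bsub>PGL2 p\<^esub> inv\<^bsub>PGL2 p\<^esub> g)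
      \<and> r (\<tau> ^^ dtau L \<tau>) = g [^]\<^bsub>PGL2 p\<^esub> dtau L \<tau>)"

definition strongly_compatible_wrt :: "nat \<Rightarrow> qbar set \<Rightarrow> qbar set \<Rightarrow> ((qbar \<Rightarrow> qbar) \<Rightarrow> mat2 set) \<Rightarrow> bool" where
  "strongly_compatible_wrt p L K r \<longleftrightarrow> (\<forall>\<tau>\<in>absGal K. \<exists>g\<in>carrier (PGL2 p).
      (\<forall>\<sigma>\<in>absGal L. r (\<tau> \<circ> \<sigma> \<circ> inv_into UNIV \<tau>) = g \<otimes>\<^bsub>PGL2 p\<^esub> r \<sigma> \<otimes>\<^bsub>PGL2 p\<^esub> inv\<^bsub>PGL2 p\<^esub> g)
      \<and> pdet p g = cyc_pr p \<tau>
      \<and> r (\<tau> ^^ dtau L \<tau>) = g [^]\<^bsub>PGL2 p\<^esub> dtau L \<tau>)"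

end

theory Submission
  imports Defs
begin

lemma cmod: "[(x::int) mod m = x] (mod m)"
  by (simp add: cong_def)

lemma h2: "((a::int) * (x mod m) + b * (y mod m)) mod m = (a*x + b*y) mod m"
  by (metis mod_add_eq mod_mult_right_eq)
lemma h2': "((x::int) mod m * a + y mod m * b) mod m = (x*a + y*b) mod m"
  by (metis mod_add_eq mod_mult_left_eq)

lemma msmul_msmul: "msmul p m (msmul p l A) = msmul p (m*l) A"
  by (cases A) (simp add: msmul_def mod_simps algebra_simps)

lemma msmul_cong: assumes "[l = l'] (mod int p)" shows "msmul p l A = msmul p l' A"
proof -
  have "(l*x) mod int p = (l'*x) mod int p" for x
    using assms unfolding cong_def by (metis mod_mult_left_eq)
  thus ?thesis by (cases A) (simp add: msmul_def)
qed

lemma gl2_msmul1: "A \<in> gl2 p \<Longrightarrow> msmul p 1 A = A"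
  by (cases A) (auto simp: msmul_def gl2_def)

lemma mdet_msmul: "[mdet (msmul p l A) = l*l*mdet A] (mod int p)"
proof (cases A)
  case (fields a b c d)
  have "[mdet (msmul p l A) = (l*a)*(l*d) - (l*b)*(l*c)] (mod int p)"
    unfolding fields msmul_def mdet_def by (simp; intro cong_diff cong_mult cmod)
  also have "(l*a)*(l*d) - (l*b)*(l*c) = l*l*mdet A" by (simp add: fields mdet_def algebra_simps)
  finally show ?thesis .
qed

lemma mdet_mmul: "[mdet (mmul p A B) = mdet A * mdet B] (mod int p)"
proof (cases A; cases B)
  fix a b c d e f g h assume AB: "A = (a,b,c,d)" "B = (e,f,g,h)"
  have "[mdet (mmul p A B) = (a*e + b*g)*(c*f+d*h) - (a*f+b*h)*(c*e+d*g)] (mod int p)"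
    unfolding AB mmul_def mdet_def by (simp; intro cong_diff cong_mult cmod)
  also have "(a*e + b*g)*(c*f+d*h) - (a*f+b*h)*(c*e+d*g) = mdet A * mdet B"
    by (simp add: AB mdet_def algebra_simps)
  finally show ?thesis .
qed

lemma mmul_assoc: "mmul p (mmul p A B) C = mmul p A (mmul p B C)"
  by (cases A; cases B; cases C) (simp only: mmul_def split h2 h2'; simp add: algebra_simps)

lemma mmul_msmul: "mmul p (msmul p l A) (msmul p m B) = msmul p (l*m) (mmul p A B)"
  by (cases A; cases B) (simp only: mmul_def msmul_def split h2 h2'; simp only: mult.assoc[symmetric] mod_mult_right_eq; simp add: algebra_simps)

locale pp = fixes p :: nat assumes pr: "prime p" and p2: "2 < p"
begin

abbreviation P where "P \<equiv> int p"

lemma Pprime: "prime P" using pr by simp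
lemma Pgt1: "P > 1" using pr prime_gt_1_nat by auto

lemma ndvd_mult: "\<not> P dvd x \<Longrightarrow> \<not> P dvd y \<Longrightarrow> \<not> P dvd x*y"
  using Pprime prime_dvd_mult_iff by blast

lemma invl: assumes "\<not> P dvd l" obtains m where "[m*l = 1] (mod P)" "\<not> P dvd m"
proof -
  have "coprime l P" using prime_imp_coprime[OF Pprime assms] by (simp add: ac_simps)
  then obtain m where m: "[l*m = 1] (mod P)" using cong_solve_coprime_int by blast
  have "\<not> P dvd m"
  proof
    assume "P dvd m" hence "P dvd l*m" by simp
    hence "P dvd 1" using m cong_dvd_iff by blast
    thus False using Pgt1 by auto
  qed
  thus ?thesis using that m by (simp add: ac_simps)
qed

lemma msmul_gl2: "A \<in> gl2 p \<Longrightarrow> \<not> P dvd l \<Longrightarrow> msmul p l A \<in> gl2 p"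
proof -
  assume A: "A \<in> gl2 p" and l: "\<not> P dvd l"
  have d: "\<not> P dvd mdet A" using A by (auto simp: gl2_def mdet_def)
  have "\<not> P dvd l*l*mdet A" using ndvd_mult[OF ndvd_mult[OF l l] d] .
  hence "\<not> P dvd mdet (msmul p l A)" using mdet_msmul cong_dvd_iff by blast
  moreover have "P > 0" using Pgt1 by simp
  ultimately show ?thesis by (cases A) (simp add: gl2_def msmul_def mdet_def)
qed

lemma mmul_gl2: "A \<in> gl2 p \<Longrightarrow> B \<in> gl2 p \<Longrightarrow> mmul p A B \<in> gl2 p"
proof -
  assume A: "A \<in> gl2 p" and B: "B \<in> gl2 p"
  have d: "\<not> P dvd mdet A" "\<not> P dvd mdet B" using A B by (auto simp: gl2_def mdet_def)
  hence "\<not> P dvd mdet (mmul p A B)" using mdet_mmul cong_dvd_iff ndvd_mult by blast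
  moreover have "P > 0" using Pgt1 by simp
  ultimately show ?thesis by (cases A; cases B) (simp add: gl2_def mmul_def mdet_def)
qed

lemma self_pcls: "A \<in> gl2 p \<Longrightarrow> A \<in> pcls p A"
  unfolding pcls_def using gl2_msmul1[of A p] Pgt1 by (auto intro!: exI[of _ 1])

lemma pcls_sub: assumes A: "A \<in> gl2 p" and B: "B \<in> pcls p A" shows "pcls p B \<subseteq> pcls p A"
proof
  fix C assume "C \<in> pcls p B"
  then obtain l' where l': "\<not> P dvd l'" "C = msmul p l' B" "C \<in> gl2 p" unfolding pcls_def by auto
  obtain l where l: "\<not> P dvd l" "B = msmul p l A" using B unfolding pcls_def by auto
  have "C = msmul p (l'*l) A" using l l' by (simp add: msmul_msmul)
  moreover have "\<not> P dvd l'*l" using ndvd_mult l l' by blast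
  ultimately show "C \<in> pcls p A" using l' unfolding pcls_def by blast
qed

lemma pcls_eq: assumes A: "A \<in> gl2 p" and B: "B \<in> pcls p A" shows "pcls p B = pcls p A"
proof
  show "pcls p B \<subseteq> pcls p A" by (rule pcls_sub[OF A B])
  obtain l where l: "\<not> P dvd l" "B = msmul p l A" using B unfolding pcls_def by auto
  obtain m where m: "[m*l = 1] (mod P)" "\<not> P dvd m" using invl[OF l(1)] by blast
  have "msmul p m B = msmul p (m*l) A" using l by (simp add: msmul_msmul)
  also have "\<dots> = msmul p 1 A" by (rule msmul_cong[OF m(1)])
  also have "\<dots> = A" using gl2_msmul1[OF A] .
  finally have "A \<in> pcls p B" using m(2) A unfolding pcls_def by auto
  moreover have "B \<in> gl2 p" using B unfolding pcls_def by auto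
  ultimately show "pcls p A \<subseteq> pcls p B" using pcls_sub by blast
qed

lemma pcls_msmul: "A \<in> gl2 p \<Longrightarrow> \<not> P dvd l \<Longrightarrow> pcls p (msmul p l A) = pcls p A"
  by (rule pcls_eq) (auto simp: pcls_def msmul_gl2)

definition rep :: "mat2 set \<Rightarrow> mat2" where "rep U = (SOME M. M \<in> U)"

lemma rep: assumes "A \<in> gl2 p" shows "rep (pcls p A) \<in> pcls p A" "rep (pcls p A) \<in> gl2 p"
   "pcls p (rep (pcls p A)) = pcls p A"
proof -
  show 1: "rep (pcls p A) \<in> pcls p A" unfolding rep_def by (rule someI[of _ A]) (rule self_pcls[OF assms])
  thus "rep (pcls p A) \<in> gl2 p" unfolding pcls_def by auto
  show "pcls p (rep (pcls p A)) = pcls p A" using pcls_eq[OF assms 1] .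
qed

lemma mult_pcls: assumes A: "A \<in> gl2 p" and B: "B \<in> gl2 p"
  shows "pcls p A \<otimes>\<^bsub>PGL2 p\<^esub> pcls p B = pcls p (mmul p A B)"
proof -
  obtain l where l: "\<not> P dvd l" "rep (pcls p A) = msmul p l A" using rep(1)[OF A] unfolding pcls_def by auto
  obtain m where m: "\<not> P dvd m" "rep (pcls p B) = msmul p m B" using rep(1)[OF B] unfolding pcls_def by auto
  have "pcls p A \<otimes>\<^bsub>PGL2 p\<^esub> pcls p B = pcls p (mmul p (rep (pcls p A)) (rep (pcls p B)))"
    by (simp add: PGL2_def rep_def)
  also have "\<dots> = pcls p (msmul p (l*m) (mmul p A B))" by (simp add: l m mmul_msmul)
  also have "\<dots> = pcls p (mmul p A B)" using pcls_msmul[OF mmul_gl2[OF A B]] ndvd_mult[OF l(1) m(1)] by simp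
  finally show ?thesis .
qed

definition I2 :: mat2 where "I2 = (1,0,0,1)"
lemma I2_gl2: "I2 \<in> gl2 p" using Pgt1 by (simp add: I2_def gl2_def)
lemma mmul_I2: "A \<in> gl2 p \<Longrightarrow> mmul p I2 A = A"
  by (cases A) (auto simp: I2_def mmul_def gl2_def)

definition adj :: "mat2 \<Rightarrow> mat2" where
  "adj A = (case A of (a,b,c,d) \<Rightarrow> (d mod P, (-b) mod P, (-c) mod P, a mod P))"

lemma adj_gl2: assumes A: "A \<in> gl2 p" shows "adj A \<in> gl2 p"
proof -
  have d: "\<not> P dvd mdet A" using A by (auto simp: gl2_def mdet_def)
  have "[mdet (adj A) = mdet A] (mod P)"
  proof (cases A)
    case (fields a b c d)
    have "[mdet (adj A) = d*a - (-b)*(-c)] (mod P)"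
      unfolding fields adj_def mdet_def prod.case by (intro cong_diff cong_mult cmod)
    thus ?thesis by (simp add: fields mdet_def algebra_simps)
  qed
  hence "\<not> P dvd mdet (adj A)" using d cong_dvd_iff by blast
  moreover have "P > 0" using Pgt1 by simp
  ultimately show ?thesis by (cases A) (simp add: gl2_def adj_def mdet_def)
qed

lemma mmul_adj: "mmul p (adj A) A = msmul p (mdet A) I2"
  by (cases A) (simp only: adj_def mmul_def msmul_def I2_def mdet_def prod.case h2 h2'; simp add: algebra_simps)

lemma carrier_PGL2: "carrier (PGL2 p) = pcls p ` gl2 p" by (simp add: PGL2_def)
lemma one_PGL2: "\<one>\<^bsub>PGL2 p\<^esub> = pcls p I2" by (simp add: PGL2_def I2_def)

lemma group_PGL2: "group (PGL2 p)"
proof (rule groupI)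
  fix x y assume "x \<in> carrier (PGL2 p)" "y \<in> carrier (PGL2 p)"
  then obtain A B where "A \<in> gl2 p" "B \<in> gl2 p" "x = pcls p A" "y = pcls p B" by (auto simp: carrier_PGL2)
  thus "x \<otimes>\<^bsub>PGL2 p\<^esub> y \<in> carrier (PGL2 p)" by (simp add: mult_pcls mmul_gl2 carrier_PGL2)
next
  show "\<one>\<^bsub>PGL2 p\<^esub> \<in> carrier (PGL2 p)" using I2_gl2 by (simp add: one_PGL2 carrier_PGL2)
next
  fix x y z assume "x \<in> carrier (PGL2 p)" "y \<in> carrier (PGL2 p)" "z \<in> carrier (PGL2 p)"
  then obtain A B C where "A \<in> gl2 p" "B \<in> gl2 p" "C \<in> gl2 p" "x = pcls p A" "y = pcls p B" "z = pcls p C"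
    by (auto simp: carrier_PGL2)
  thus "x \<otimes>\<^bsub>PGL2 p\<^esub> y \<otimes>\<^bsub>PGL2 p\<^esub> z = x \<otimes>\<^bsub>PGL2 p\<^esub> (y \<otimes>\<^bsub>PGL2 p\<^esub> z)"
    by (simp add: mult_pcls mmul_gl2 mmul_assoc)
next
  fix x assume "x \<in> carrier (PGL2 p)"
  then obtain A where "A \<in> gl2 p" "x = pcls p A" by (auto simp: carrier_PGL2)
  thus "\<one>\<^bsub>PGL2 p\<^esub> \<otimes>\<^bsub>PGL2 p\<^esub> x = x" by (simp add: one_PGL2 mult_pcls I2_gl2 mmul_I2)
next
  fix x assume "x \<in> carrier (PGL2 p)"
  then obtain A where A: "A \<in> gl2 p" "x = pcls p A" by (auto simp: carrier_PGL2)
  have d: "\<not> P dvd mdet A" using A by (auto simp: gl2_def mdet_def)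
  have "pcls p (adj A) \<otimes>\<^bsub>PGL2 p\<^esub> x = pcls p (msmul p (mdet A) I2)"
    by (simp add: A mult_pcls adj_gl2 mmul_adj)
  also have "\<dots> = \<one>\<^bsub>PGL2 p\<^esub>" using pcls_msmul[OF I2_gl2 d] by (simp add: one_PGL2)
  finally show "\<exists>y\<in>carrier (PGL2 p). y \<otimes>\<^bsub>PGL2 p\<^esub> x = \<one>\<^bsub>PGL2 p\<^esub>"
    using adj_gl2[OF A(1)] by (auto simp: carrier_PGL2)
qed

end

context pp begin

lemma Leg_cong: assumes "[a = b] (mod P)" shows "Legendre a P = Legendre b P"
proof -
  have "[a = 0] (mod P) \<longleftrightarrow> [b = 0] (mod P)" using assms cong_sym cong_trans by blast
  moreover have "QuadRes P a \<longleftrightarrow> QuadRes P b" unfolding QuadRes_def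
    using assms cong_sym cong_trans by blast
  ultimately show ?thesis by (simp add: Legendre_def)
qed

lemma Leg_vals: "Legendre a P \<in> {-1,0,1}" by (simp add: Legendre_def)

lemma small_cong: assumes "x \<in> {-1,0,1::int}" "y \<in> {-1,0,1}" "[x = y] (mod P)" shows "x = y"
proof (rule ccontr)
  assume ne: "x \<noteq> y"
  have "P dvd (x - y)" using assms(3) by (simp add: cong_iff_dvd_diff)
  hence "\<bar>P\<bar> \<le> \<bar>x - y\<bar>" using ne by (intro dvd_imp_le_int) auto
  moreover have "\<bar>x - y\<bar> \<le> 2" using assms(1,2) by auto
  moreover have "P \<ge> 3" using p2 by simp
  ultimately show False by simp
qed

lemma Leg_mult: "Legendre (a*b) P = Legendre a P * Legendre b P"
proof -
  have e: "[Legendre x P = x ^ ((p - 1) div 2)] (mod P)" for x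
    using euler_criterion[OF pr p2] by simp
  have "[Legendre a P * Legendre b P = a ^ ((p - 1) div 2) * b ^ ((p - 1) div 2)] (mod P)"
    by (intro cong_mult e)
  hence "[Legendre (a*b) P = Legendre a P * Legendre b P] (mod P)"
    using e[of "a*b"] unfolding power_mult_distrib by (meson cong_sym cong_trans)
  moreover have "Legendre a P * Legendre b P \<in> {-1,0,1}" using Leg_vals[of a] Leg_vals[of b] by auto
  ultimately show ?thesis using small_cong Leg_vals by blast
qed

lemma Leg_sq: assumes "\<not> P dvd l" shows "Legendre (l*l) P = 1"
proof -
  have "\<not> [l*l = 0] (mod P)" using ndvd_mult[OF assms assms] by (simp add: cong_0_iff)
  moreover have "QuadRes P (l*l)" unfolding QuadRes_def by (rule exI[of _ l]) (simp add: power2_eq_square)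
  ultimately show ?thesis by (simp add: Legendre_def)
qed

lemma Leg_1: "Legendre 1 P = 1" using Leg_sq[of 1] Pgt1 by (simp add: zdvd_not_zless)

lemma pdet_pcls: assumes A: "A \<in> gl2 p" shows "pdet p (pcls p A) = Legendre (mdet A) P"
proof -
  obtain l where l: "\<not> P dvd l" "rep (pcls p A) = msmul p l A" using rep(1)[OF A] unfolding pcls_def by auto
  have "pdet p (pcls p A) = Legendre (mdet (msmul p l A)) P" using l by (simp add: pdet_def rep_def)
  also have "\<dots> = Legendre (l*l*mdet A) P" by (rule Leg_cong[OF mdet_msmul])
  also have "\<dots> = Legendre (mdet A) P" using Leg_mult[of "l*l" "mdet A"] Leg_sq[OF l(1)] by simp
  finally show ?thesis .
qed

lemma pdet_mult: assumes "U \<in> carrier (PGL2 p)" "V \<in> carrier (PGL2 p)"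
  shows "pdet p (U \<otimes>\<^bsub>PGL2 p\<^esub> V) = pdet p U * pdet p V"
proof -
  obtain A B where AB: "A \<in> gl2 p" "B \<in> gl2 p" "U = pcls p A" "V = pcls p B" using assms by (auto simp: carrier_PGL2)
  have "pdet p (U \<otimes>\<^bsub>PGL2 p\<^esub> V) = Legendre (mdet (mmul p A B)) P"
    by (simp add: AB mult_pcls pdet_pcls mmul_gl2)
  also have "\<dots> = Legendre (mdet A * mdet B) P" by (rule Leg_cong[OF mdet_mmul])
  finally show ?thesis by (simp add: AB pdet_pcls Leg_mult)
qed

lemma pdet_one: "pdet p \<one>\<^bsub>PGL2 p\<^esub> = 1"
  by (simp add: one_PGL2 pdet_pcls I2_gl2 Leg_1) (simp add: I2_def mdet_def Leg_1)

lemma pdet_pow: assumes "g \<in> carrier (PGL2 p)" shows "pdet p (g [^]\<^bsub>PGL2 p\<^esub> (n::nat)) = pdet p g ^ n"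
proof (induction n)
  case 0 thus ?case by (simp add: pdet_one)
next
  case (Suc n)
  interpret PG: group "PGL2 p" by (rule group_PGL2)
  show ?case using Suc assms by (simp add: pdet_mult)
qed

end

lemma field_aut_inj: "field_aut s \<Longrightarrow> inj s" by (simp add: field_aut_def bij_is_inj)

lemma field_aut_id: "field_aut id" by (simp add: field_aut_def)

lemma field_aut_comp: "field_aut s \<Longrightarrow> field_aut t \<Longrightarrow> field_aut (s \<circ> t)"
  by (simp add: field_aut_def bij_comp)

lemma field_aut_inv: assumes s: "field_aut s" shows "field_aut (inv_into UNIV s)"
proof -
  have b: "bij s" using s by (simp add: field_aut_def)
  have ff: "s (inv_into UNIV s y) = y" for y using b by (simp add: bij_is_surj surj_f_inv_f)
  have fi: "inv_into UNIV s (s y) = y" for y using b by (simp add: bij_is_inj inv_f_f)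
  have add: "inv_into UNIV s (x + y) = inv_into UNIV s x + inv_into UNIV s y" for x y
  proof -
    have "s (inv_into UNIV s x + inv_into UNIV s y) = x + y" using s ff by (simp add: field_aut_def)
    thus ?thesis using fi by metis
  qed
  have mul: "inv_into UNIV s (x * y) = inv_into UNIV s x * inv_into UNIV s y" for x y
  proof -
    have "s (inv_into UNIV s x * inv_into UNIV s y) = x * y" using s ff by (simp add: field_aut_def)
    thus ?thesis using fi by metis
  qed
  have "inv_into UNIV s 1 = 1" using s fi by (metis field_aut_def)
  thus ?thesis using add mul bij_imp_bij_inv[OF b] by (simp add: field_aut_def)
qed

lemma field_aut_funpow: "field_aut s \<Longrightarrow> field_aut (s ^^ n)"
  by (induction n) (simp_all add: field_aut_id field_aut_comp)

lemma absGal_id: "id \<in> absGal K" by (simp add: absGal_def field_aut_id)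
lemma absGal_comp: "s \<in> absGal K \<Longrightarrow> t \<in> absGal K \<Longrightarrow> s \<circ> t \<in> absGal K"
  by (simp add: absGal_def field_aut_comp)
lemma absGal_inv: assumes "s \<in> absGal K" shows "inv_into UNIV s \<in> absGal K"
proof -
  have fa: "field_aut s" and fx: "\<forall>x\<in>K. s x = x" using assms by (auto simp: absGal_def)
  have "\<forall>x\<in>K. inv_into UNIV s x = x" using fx field_aut_inj[OF fa] by (metis inv_f_f)
  thus ?thesis using field_aut_inv[OF fa] by (simp add: absGal_def)
qed
lemma absGal_funpow: "s \<in> absGal K \<Longrightarrow> s ^^ n \<in> absGal K"
  by (induction n) (simp_all add: absGal_id absGal_comp)

lemma absGal_mono: "K \<subseteq> L \<Longrightarrow> absGal L \<subseteq> absGal K" by (auto simp: absGal_def)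

lemma carrier_Gal[simp]: "carrier (GalGrp K) = absGal K" by (simp add: GalGrp_def)
lemma mult_Gal[simp]: "x \<otimes>\<^bsub>GalGrp K\<^esub> y = x \<circ> y" by (simp add: GalGrp_def)
lemma one_Gal[simp]: "\<one>\<^bsub>GalGrp K\<^esub> = id" by (simp add: GalGrp_def)

lemma group_Gal: "group (GalGrp K)"
proof (rule groupI)
  fix x assume "x \<in> carrier (GalGrp K)"
  hence x: "x \<in> absGal K" by simp
  have "inv_into UNIV x \<circ> x = id" using x field_aut_inj by (auto simp: absGal_def)
  thus "\<exists>y\<in>carrier (GalGrp K). y \<otimes>\<^bsub>GalGrp K\<^esub> x = \<one>\<^bsub>GalGrp K\<^esub>"
    using absGal_inv[OF x] by auto
qed (auto simp: absGal_id absGal_comp comp_assoc)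

lemma inv_Gal: assumes x: "x \<in> absGal K" shows "inv\<^bsub>GalGrp K\<^esub> x = inv_into UNIV x"
proof -
  interpret G: group "GalGrp K" by (rule group_Gal)
  have "inv_into UNIV x \<circ> x = id" using x field_aut_inj by (auto simp: absGal_def)
  thus ?thesis using G.inv_equality[of "inv_into UNIV x" x] x absGal_inv[OF x] by simp
qed

lemma pow_Gal: "x [^]\<^bsub>GalGrp K\<^esub> (n::nat) = x ^^ n"
  by (induction n) (simp_all add: funpow_Suc_right del: funpow.simps)

context pp begin

lemma fa_pow: "field_aut s \<Longrightarrow> s (x ^ n) = s x ^ n"
  by (induction n) (simp_all add: field_aut_def)

lemma exists_zeta: "\<exists>z::qbar. z ^ p = 1 \<and> z \<noteq> 1"
proof -
  have p0: "p > 0" using p2 by simp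
  obtain z :: qbar where z: "(\<Sum>k\<le>p-1. (\<lambda>_. 1::qbar) k * z ^ k) = 0"
    using alg_closed[of "p-1" "\<lambda>_. 1::qbar"] p2 by auto
  have "{..p-1} = {..<p}" using p0 by auto
  hence s: "(\<Sum>k<p. z ^ k) = 0" using z by simp
  have "z ^ p - 1 = 0" using power_diff_1_eq[of z p] s by simp
  moreover have "z \<noteq> 1"
  proof
    assume "z = 1" hence "(\<Sum>k<p. z ^ k) = of_nat p" by simp
    thus False using s p0 by simp
  qed
  ultimately show ?thesis by auto
qed

definition zeta :: qbar where "zeta = (SOME z. z ^ p = 1 \<and> z \<noteq> 1)"

lemma zeta: "zeta ^ p = 1" "zeta \<noteq> 1"
  using someI_ex[OF exists_zeta] by (simp_all add: zeta_def)

lemma zeta_nz: "zeta \<noteq> 0"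
proof
  assume z: "zeta = 0"
  have "(0::qbar) ^ p = 0" using p2 by simp
  with zeta(1) z show False by simp
qed

lemma root_ord: assumes "(x::qbar) ^ p = 1" "x \<noteq> 1" "x ^ i = 1" shows "p dvd i"
proof (rule ccontr)
  assume nd: "\<not> p dvd i"
  hence "i \<noteq> 0" by (metis dvd_0_right)
  have "coprime i p" using prime_imp_coprime[OF pr nd] by (simp add: coprime_commute)
  then obtain a b where ab: "i * a = p * b + 1" using bezout_nat[OF \<open>i \<noteq> 0\<close>, of p] by auto
  have "x ^ (i*a) = 1" using assms(3) by (simp add: power_mult)
  moreover have "x ^ (p*b + 1) = x" using assms(1) by (simp add: power_add power_mult)
  ultimately show False using ab assms(2) by simp
qed

lemma zeta_pow_mod: "zeta ^ i = zeta ^ (i mod p)"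
proof -
  have "zeta ^ i = zeta ^ (p * (i div p) + i mod p)" by simp
  also have "\<dots> = (zeta ^ p) ^ (i div p) * zeta ^ (i mod p)" by (simp only: power_add power_mult)
  also have "\<dots> = zeta ^ (i mod p)" using zeta(1) by simp
  finally show ?thesis .
qed

lemma zeta_inj: assumes "a < p" "b < p" "zeta ^ a = zeta ^ b" shows "a = b"
proof (rule ccontr)
  assume "a \<noteq> b"
  then consider "a < b" | "b < a" by linarith
  thus False
  proof cases
    case 1
    have "zeta ^ b = zeta ^ a * zeta ^ (b - a)" using 1 by (simp flip: power_add)
    moreover have "zeta ^ a \<noteq> 0" using zeta_nz by simp
    ultimately have "zeta ^ (b - a) = 1" using assms(3) zeta_nz by (simp add: mult_cancel_left1)
    hence "p dvd b - a" using root_ord zeta by blast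
    thus False using 1 assms dvd_imp_le[of p "b-a"] by simp
  next
    case 2
    have "zeta ^ a = zeta ^ b * zeta ^ (a - b)" using 2 by (simp flip: power_add)
    moreover have "zeta ^ b \<noteq> 0" using zeta_nz by simp
    ultimately have "zeta ^ (a - b) = 1" using assms(3) zeta_nz by (simp add: mult_cancel_left1)
    hence "p dvd a - b" using root_ord zeta by blast
    thus False using 2 assms dvd_imp_le[of p "a-b"] by simp
  qed
qed

lemma zeta_eq_cong: "zeta ^ a = zeta ^ b \<Longrightarrow> [a = b] (mod p)"
  using zeta_inj[of "a mod p" "b mod p"] zeta_pow_mod p2 by (simp add: cong_def)

lemma roots_are_pows: assumes "(w::qbar) ^ p = 1" shows "\<exists>k<p. w = zeta ^ k"
proof -
  define q :: "qbar poly" where "q = monom 1 p - 1"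
  have pq: "poly q x = x ^ p - 1" for x by (simp add: q_def poly_monom)
  have "coeff q p = 1" using p2 by (simp add: q_def coeff_monom)
  hence q0: "q \<noteq> 0" by auto
  have "degree q \<le> p" unfolding q_def
    by (rule order.trans[OF degree_diff_le_max]) (simp add: degree_monom_le)
  hence c: "card {x. poly q x = 0} \<le> p" using card_poly_roots_bound[OF q0] by simp
  have S: "{x. poly q x = 0} = {x. x ^ p = 1}" by (simp add: pq)
  have inj: "inj_on (\<lambda>k. zeta ^ k) {..<p}" using zeta_inj by (auto simp: inj_on_def)
  have sub: "(\<lambda>k. zeta ^ k) ` {..<p} \<subseteq> {x. x ^ p = 1}"
  proof
    fix x assume "x \<in> (\<lambda>k. zeta ^ k) ` {..<p}"
    then obtain k where "x = zeta ^ k" by auto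
    have "(zeta ^ k) ^ p = (zeta ^ p) ^ k" by (metis power_mult mult.commute)
    thus "x \<in> {x. x ^ p = 1}" using zeta(1) \<open>x = zeta ^ k\<close> by simp
  qed
  have "card ((\<lambda>k. zeta ^ k) ` {..<p}) = p" using card_image[OF inj] by simp
  moreover have fin: "finite {x::qbar. x ^ p = 1}" using poly_roots_finite[OF q0] S by simp
  ultimately have "card {x::qbar. x ^ p = 1} = p" using c card_mono[OF fin sub] unfolding S by linarith
  hence "(\<lambda>k. zeta ^ k) ` {..<p} = {x. x ^ p = 1}"
    using card_subset_eq[OF fin sub] card_image[OF inj] by simp
  thus ?thesis using assms by auto
qed

lemma cyc_exists: assumes s: "field_aut s" shows "\<exists>a::nat. \<forall>\<zeta>::qbar. \<zeta> ^ p = 1 \<longrightarrow> s \<zeta> = \<zeta> ^ a"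
proof -
  have "s zeta ^ p = 1" using fa_pow[OF s, of zeta p] zeta(1) s by (simp add: field_aut_def)
  then obtain a where a: "s zeta = zeta ^ a" using roots_are_pows by blast
  have "s w = w ^ a" if w: "w ^ p = 1" for w
  proof -
    obtain k where "w = zeta ^ k" using roots_are_pows[OF w] by blast
    hence "s w = (s zeta) ^ k" using fa_pow[OF s] by simp
    also have "\<dots> = (zeta ^ k) ^ a" using a by (metis power_mult mult.commute)
    finally show ?thesis using \<open>w = zeta ^ k\<close> by simp
  qed
  thus ?thesis by blast
qed

definition cexp :: "(qbar \<Rightarrow> qbar) \<Rightarrow> nat" where
  "cexp s = (SOME a::nat. \<forall>\<zeta>::qbar. \<zeta> ^ p = 1 \<longrightarrow> s \<zeta> = \<zeta> ^ a)"

lemma cexp: "field_aut s \<Longrightarrow> s zeta = zeta ^ cexp s"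
  using someI_ex[OF cyc_exists] zeta(1) unfolding cexp_def by blast

lemma cyc_pr_cexp: "cyc_pr p s = Legendre (int (cexp s)) P"
  by (simp add: cyc_pr_def cexp_def)

lemma cyc_mult: assumes s: "field_aut s" and t: "field_aut t"
  shows "cyc_pr p (s \<circ> t) = cyc_pr p s * cyc_pr p t"
proof -
  have "zeta ^ cexp (s \<circ> t) = (s \<circ> t) zeta" using cexp[OF field_aut_comp[OF s t]] by simp
  also have "\<dots> = zeta ^ (cexp s * cexp t)"
    using cexp[OF s] cexp[OF t] fa_pow[OF s] by (simp add: power_mult)
  finally have "[cexp (s \<circ> t) = cexp s * cexp t] (mod p)" by (rule zeta_eq_cong)
  hence "[int (cexp (s \<circ> t)) = int (cexp s) * int (cexp t)] (mod P)"
    using cong_int_iff[THEN iffD2] by fastforce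
  hence "Legendre (int (cexp (s \<circ> t))) P = Legendre (int (cexp s) * int (cexp t)) P" by (rule Leg_cong)
  thus ?thesis by (simp add: cyc_pr_cexp Leg_mult)
qed

lemma cyc_id: "cyc_pr p id = 1"
proof -
  have "zeta ^ cexp id = zeta ^ 1" using cexp[OF field_aut_id] by simp
  hence "[cexp id = 1] (mod p)" by (rule zeta_eq_cong)
  hence "[int (cexp id) = 1] (mod P)" using cong_int_iff[THEN iffD2] by fastforce
  hence "Legendre (int (cexp id)) P = Legendre 1 P" by (rule Leg_cong)
  thus ?thesis by (simp add: cyc_pr_cexp Leg_1)
qed

lemma cyc_funpow: "field_aut s \<Longrightarrow> cyc_pr p (s ^^ n) = cyc_pr p s ^ n"
  by (induction n) (simp_all add: cyc_id cyc_mult field_aut_funpow)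

end

lemma (in group) invl_cancel: "x \<in> carrier G \<Longrightarrow> y \<in> carrier G \<Longrightarrow> inv x \<otimes> (x \<otimes> y) = y"
  by (simp add: m_assoc[symmetric])
lemma (in group) invr_cancel: "x \<in> carrier G \<Longrightarrow> y \<in> carrier G \<Longrightarrow> x \<otimes> (inv x \<otimes> y) = y"
  by (simp add: m_assoc[symmetric])

lemma (in group) subgroup_pow: "subgroup H G \<Longrightarrow> x \<in> H \<Longrightarrow> x [^] (n::nat) \<in> H"
  by (induction n) (simp_all add: subgroup.one_closed subgroup.m_closed)

lemma (in group) hom_pow_sub:
  assumes H: "subgroup H G" and PG: "group P"
    and rc: "\<And>h. h \<in> H \<Longrightarrow> r h \<in> carrier P"
    and rm: "\<And>h h'. h \<in> H \<Longrightarrow> h' \<in> H \<Longrightarrow> r (h \<otimes> h') = r h \<otimes>\<^bsub>P\<^esub> r h'"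
  shows "r \<one> = \<one>\<^bsub>P\<^esub>" "\<And>h. h \<in> H \<Longrightarrow> r (inv h) = inv\<^bsub>P\<^esub> (r h)"
    "\<And>h. h \<in> H \<Longrightarrow> r (h [^] (n::nat)) = r h [^]\<^bsub>P\<^esub> n"
proof -
  interpret P: group P by (rule PG)
  have o: "\<one> \<in> H" using subgroup.one_closed[OF H] .
  have e: "\<one> \<otimes> \<one> = \<one>" by simp
  have X: "r \<one> = r \<one> \<otimes>\<^bsub>P\<^esub> r \<one>" using rm[OF o o] by (simp only: e)
  have "r \<one> \<otimes>\<^bsub>P\<^esub> r \<one> = \<one>\<^bsub>P\<^esub> \<otimes>\<^bsub>P\<^esub> r \<one>" using X P.l_one[OF rc[OF o]] by metis
  thus r1: "r \<one> = \<one>\<^bsub>P\<^esub>" using rc[OF o] P.right_cancel[of "r \<one>" "r \<one>" "\<one>\<^bsub>P\<^esub>"] by simp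
  show "r (inv h) = inv\<^bsub>P\<^esub> (r h)" if h: "h \<in> H" for h
  proof -
    have ih: "inv h \<in> H" using subgroup.m_inv_closed[OF H h] .
    have hc: "h \<in> carrier G" using subgroup.mem_carrier[OF H h] .
    have "r (inv h) \<otimes>\<^bsub>P\<^esub> r h = r (inv h \<otimes> h)" using rm[OF ih h] by (rule sym)
    also have "inv h \<otimes> h = \<one>" using hc by simp
    finally have "r (inv h) \<otimes>\<^bsub>P\<^esub> r h = \<one>\<^bsub>P\<^esub>" using r1 by simp
    thus ?thesis using P.inv_equality rc[OF ih] rc[OF h] by simp
  qed
  show "r (h [^] (n::nat)) = r h [^]\<^bsub>P\<^esub> n" if h: "h \<in> H" for h
  proof (induction n)
    case 0 thus ?case using r1 by simp
  next
    case (Suc n)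
    have "h [^] n \<in> H" using subgroup_pow[OF H h] .
    thus ?case using Suc rm[OF _ h] by simp
  qed
qed

lemma (in group) fin_index:
  assumes H: "subgroup H G"
    and norm: "\<And>x h. x \<in> carrier G \<Longrightarrow> h \<in> H \<Longrightarrow> x \<otimes> h \<otimes> inv x \<in> H"
    and t: "t \<in> carrier G"
    and cov: "\<And>x. x \<in> carrier G \<Longrightarrow> \<exists>n::nat. inv (t [^] n) \<otimes> x \<in> H"
    and x: "x \<in> carrier G"
  shows "\<exists>D::nat. D > 0 \<and> x [^] D \<in> H"
proof -
  have Hc: "h \<in> H \<Longrightarrow> h \<in> carrier G" for h using subgroup.mem_carrier[OF H] by simp
  have Hm: "a \<in> H \<Longrightarrow> b \<in> H \<Longrightarrow> a \<otimes> b \<in> H" for a b using subgroup.m_closed[OF H] by simp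
  have Hi: "a \<in> H \<Longrightarrow> inv a \<in> H" for a using subgroup.m_inv_closed[OF H] by simp
  obtain n :: nat where n: "inv (t [^] n) \<otimes> inv t \<in> H" using cov[of "inv t"] t by auto
  have c: "t \<otimes> t [^] n = t [^] Suc n" by (metis nat_pow_Suc2[OF t])
  have "inv (t \<otimes> t [^] n) = inv (t [^] n) \<otimes> inv t" using t by (simp add: inv_mult_group)
  hence "inv (t [^] n) \<otimes> inv t = inv (t [^] Suc n)" unfolding c by simp
  hence "inv (t [^] Suc n) \<in> H" using n by simp
  hence TD: "t [^] Suc n \<in> H" using Hi[of "inv (t [^] Suc n)"] t by simp
  obtain k :: nat where k: "inv (t [^] k) \<otimes> x \<in> H" using cov[OF x] by auto
  define h where "h = inv (t [^] k) \<otimes> x"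
  have hH: "h \<in> H" using k h_def by simp
  have xe: "x = t [^] k \<otimes> h" using x t by (simp add: h_def invr_cancel)
  have ind: "inv (t [^] (k*j)) \<otimes> x [^] j \<in> H" for j
  proof (induction j)
    case 0 thus ?case using subgroup.one_closed[OF H] by simp
  next
    case (Suc j)
    define hj where "hj = inv (t [^] (k*j)) \<otimes> x [^] j"
    have hjH: "hj \<in> H" using Suc hj_def by simp
    have e: "inv (t [^] (k * Suc j)) \<otimes> x [^] Suc j = (inv (t [^] k) \<otimes> hj \<otimes> inv (inv (t [^] k))) \<otimes> h"
    proof -
      have "t [^] (k * Suc j) = t [^] (k*j) \<otimes> t [^] k" using t by (simp add: nat_pow_mult add.commute)
      hence "inv (t [^] (k * Suc j)) = inv (t [^] k) \<otimes> inv (t [^] (k*j))" using t by (simp add: inv_mult_group)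
      moreover have "x [^] Suc j = x [^] j \<otimes> (t [^] k \<otimes> h)" using xe by simp
      ultimately show ?thesis using t x Hc[OF hH] by (simp add: hj_def m_assoc)
    qed
    have "inv (t [^] k) \<otimes> hj \<otimes> inv (inv (t [^] k)) \<in> H" using norm[of "inv (t [^] k)" hj] hjH t by simp
    thus ?case unfolding e using Hm hH by blast
  qed
  have "t [^] (k * Suc n) = (t [^] Suc n) [^] k" using nat_pow_pow[OF t, of "Suc n" k] by (simp only: mult.commute)
  hence "t [^] (k * Suc n) \<in> H" using subgroup_pow[OF H TD] by simp
  hence "t [^] (k * Suc n) \<otimes> (inv (t [^] (k * Suc n)) \<otimes> x [^] Suc n) \<in> H" using ind Hm by blast
  hence "x [^] Suc n \<in> H" using t x by (simp add: invr_cancel)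
  thus ?thesis by blast
qed

lemma (in group) pw_from_min:
  assumes H: "subgroup H G" and PG: "group P" and t: "t \<in> carrier G"
    and d: "d > (0::nat)" "t [^] d \<in> H" and dmin: "\<And>j. 0 < j \<Longrightarrow> j < d \<Longrightarrow> t [^] j \<notin> H"
    and rc: "\<And>h. h \<in> H \<Longrightarrow> r h \<in> carrier P"
    and rm: "\<And>h h'. h \<in> H \<Longrightarrow> h' \<in> H \<Longrightarrow> r (h \<otimes> h') = r h \<otimes>\<^bsub>P\<^esub> r h'"
    and g: "g \<in> carrier P" and rd: "r (t [^] d) = g [^]\<^bsub>P\<^esub> d"
    and k: "t [^] (k::nat) \<in> H"
  shows "r (t [^] k) = g [^]\<^bsub>P\<^esub> k"
proof -
  interpret P: group P by (rule PG)
  have Hm: "a \<in> H \<Longrightarrow> b \<in> H \<Longrightarrow> a \<otimes> b \<in> H" for a b using subgroup.m_closed[OF H] by simp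
  have Hi: "a \<in> H \<Longrightarrow> inv a \<in> H" for a using subgroup.m_inv_closed[OF H] by simp
  define q s where "q = k div d" and "s = k mod d"
  have ks: "k = d*q + s" by (simp add: q_def s_def)
  have e: "t [^] k = (t [^] d) [^] q \<otimes> t [^] s" using t by (simp add: ks nat_pow_mult nat_pow_pow)
  have "t [^] s = inv ((t [^] d) [^] q) \<otimes> t [^] k" using t by (simp add: e invl_cancel)
  hence "t [^] s \<in> H" using Hm[OF Hi[OF subgroup_pow[OF H d(2)]] k] by simp
  hence "s = 0" using dmin[of s] d by (auto simp: s_def)
  hence "t [^] k = (t [^] d) [^] q" using e t by simp
  hence "r (t [^] k) = (g [^]\<^bsub>P\<^esub> d) [^]\<^bsub>P\<^esub> q" using hom_pow_sub(3)[OF H PG rc rm d(2)] rd by simp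
  also have "\<dots> = g [^]\<^bsub>P\<^esub> k" using g \<open>s = 0\<close> by (simp add: P.nat_pow_pow ks)
  finally show ?thesis .
qed

lemma (in group) ext_lemma:
  assumes PG: "group P" and H: "subgroup H G"
    and norm: "\<And>x h. x \<in> carrier G \<Longrightarrow> h \<in> H \<Longrightarrow> x \<otimes> h \<otimes> inv x \<in> H"
    and t: "t \<in> carrier G"
    and cov: "\<And>x. x \<in> carrier G \<Longrightarrow> \<exists>n::nat. inv (t [^] n) \<otimes> x \<in> H"
    and rc: "\<And>h. h \<in> H \<Longrightarrow> r h \<in> carrier P"
    and rm: "\<And>h h'. h \<in> H \<Longrightarrow> h' \<in> H \<Longrightarrow> r (h \<otimes> h') = r h \<otimes>\<^bsub>P\<^esub> r h'"
    and g: "g \<in> carrier P"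
    and conj: "\<And>h. h \<in> H \<Longrightarrow> r (t \<otimes> h \<otimes> inv t) = g \<otimes>\<^bsub>P\<^esub> r h \<otimes>\<^bsub>P\<^esub> inv\<^bsub>P\<^esub> g"
    and pw: "\<And>k::nat. t [^] k \<in> H \<Longrightarrow> r (t [^] k) = g [^]\<^bsub>P\<^esub> k"
  shows "\<exists>R \<in> hom G P. (\<forall>h\<in>H. R h = r h) \<and> R t = g"
proof -
  interpret P: group P by (rule PG)
  have Hc: "h \<in> H \<Longrightarrow> h \<in> carrier G" for h using subgroup.mem_carrier[OF H] by simp
  have Hm: "a \<in> H \<Longrightarrow> b \<in> H \<Longrightarrow> a \<otimes> b \<in> H" for a b using subgroup.m_closed[OF H] by simp
  have Hi: "a \<in> H \<Longrightarrow> inv a \<in> H" for a using subgroup.m_inv_closed[OF H] by simp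
  have H1: "\<one> \<in> H" using subgroup.one_closed[OF H] .
  note hp = hom_pow_sub[OF H PG rc rm]
  have conj2: "r (inv t \<otimes> h \<otimes> t) = inv\<^bsub>P\<^esub> g \<otimes>\<^bsub>P\<^esub> r h \<otimes>\<^bsub>P\<^esub> g" if h: "h \<in> H" for h
  proof -
    define h2 where "h2 = inv t \<otimes> h \<otimes> t"
    have h2H: "h2 \<in> H" using norm[of "inv t" h] h t by (simp add: h2_def)
    have "t \<otimes> h2 \<otimes> inv t = h" using t Hc[OF h] by (simp add: h2_def m_assoc invr_cancel)
    hence "r h = g \<otimes>\<^bsub>P\<^esub> r h2 \<otimes>\<^bsub>P\<^esub> inv\<^bsub>P\<^esub> g" using conj[OF h2H] by simp
    hence "inv\<^bsub>P\<^esub> g \<otimes>\<^bsub>P\<^esub> r h \<otimes>\<^bsub>P\<^esub> g = inv\<^bsub>P\<^esub> g \<otimes>\<^bsub>P\<^esub> (g \<otimes>\<^bsub>P\<^esub> r h2 \<otimes>\<^bsub>P\<^esub> inv\<^bsub>P\<^esub> g) \<otimes>\<^bsub>P\<^esub> g"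
      by simp
    also have "\<dots> = r h2" using g rc[OF h2H] by (simp add: P.m_assoc P.invl_cancel)
    finally show ?thesis by (simp add: h2_def)
  qed
  have conjm: "inv (t [^] m) \<otimes> h \<otimes> t [^] m \<in> H \<and>
      r (inv (t [^] m) \<otimes> h \<otimes> t [^] m) = inv\<^bsub>P\<^esub> (g [^]\<^bsub>P\<^esub> m) \<otimes>\<^bsub>P\<^esub> r h \<otimes>\<^bsub>P\<^esub> g [^]\<^bsub>P\<^esub> m"
    if h: "h \<in> H" for h and m :: nat
  proof (induction m)
    case 0 thus ?case using h Hc[OF h] rc[OF h] by simp
  next
    case (Suc m)
    define c where "c = inv (t [^] m) \<otimes> h \<otimes> t [^] m"
    have cH: "c \<in> H" using Suc c_def by simp
    have e: "inv (t [^] Suc m) \<otimes> h \<otimes> t [^] Suc m = inv t \<otimes> c \<otimes> t"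
      using t Hc[OF h] by (simp add: c_def inv_mult_group m_assoc)
    have "inv t \<otimes> c \<otimes> inv (inv t) \<in> H" using norm[of "inv t" c] t cH by simp
    hence m1: "inv t \<otimes> c \<otimes> t \<in> H" using t by simp
    have "r (inv t \<otimes> c \<otimes> t) = inv\<^bsub>P\<^esub> g \<otimes>\<^bsub>P\<^esub> (inv\<^bsub>P\<^esub> (g [^]\<^bsub>P\<^esub> m) \<otimes>\<^bsub>P\<^esub> r h \<otimes>\<^bsub>P\<^esub> g [^]\<^bsub>P\<^esub> m) \<otimes>\<^bsub>P\<^esub> g"
      using conj2[OF cH] Suc c_def by simp
    also have "\<dots> = inv\<^bsub>P\<^esub> (g [^]\<^bsub>P\<^esub> Suc m) \<otimes>\<^bsub>P\<^esub> r h \<otimes>\<^bsub>P\<^esub> g [^]\<^bsub>P\<^esub> Suc m"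
      using g rc[OF h] by (simp add: P.inv_mult_group P.m_assoc)
    finally show ?case using m1 e by simp
  qed
  define F where "F n x = g [^]\<^bsub>P\<^esub> (n::nat) \<otimes>\<^bsub>P\<^esub> r (inv (t [^] n) \<otimes> x)" for n x
  have wd0: "F n x = F m x" if x: "x \<in> carrier G" and a: "inv (t [^] n) \<otimes> x \<in> H"
    and b: "inv (t [^] m) \<otimes> x \<in> H" and nm: "n \<le> m" for x and n m :: nat
  proof -
    define k where "k = m - n"
    have mk: "m = n + k" using nm by (simp add: k_def)
    define a' b' where "a' = inv (t [^] n) \<otimes> x" and "b' = inv (t [^] m) \<otimes> x"
    have tm: "t [^] m = t [^] n \<otimes> t [^] k" using t by (simp add: mk nat_pow_mult)
    have ab: "a' = t [^] k \<otimes> b'" using t x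
      by (simp add: a'_def b'_def tm inv_mult_group m_assoc invr_cancel)
    have "a' \<otimes> inv b' = t [^] k" using t x Hc b by (simp add: ab b'_def m_assoc)
    hence tk: "t [^] k \<in> H" using Hm[OF a Hi[OF b]] by (simp add: a'_def b'_def)
    have "F n x = g [^]\<^bsub>P\<^esub> n \<otimes>\<^bsub>P\<^esub> (g [^]\<^bsub>P\<^esub> k \<otimes>\<^bsub>P\<^esub> r b')"
      unfolding F_def using rm[OF tk b] pw[OF tk] by (simp add: a'_def[symmetric] ab b'_def)
    also have "\<dots> = F m x" unfolding F_def using g rc b
      by (simp add: b'_def mk P.m_assoc[symmetric] P.nat_pow_mult)
    finally show ?thesis .
  qed
  have wd: "F n x = F m x" if "x \<in> carrier G" "inv (t [^] n) \<otimes> x \<in> H" "inv (t [^] m) \<otimes> x \<in> H" for x and n m :: nat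
  proof (cases "n \<le> m")
    case True show ?thesis using wd0[OF that True] by this
  next
    case False hence "m \<le> n" by simp
    from wd0[OF that(1,3,2) this] show ?thesis by (rule sym)
  qed
  define R where "R x = F (SOME n. inv (t [^] n) \<otimes> x \<in> H) x" for x
  have Rdef: "R x = F n x" if "x \<in> carrier G" "inv (t [^] n) \<otimes> x \<in> H" for x and n :: nat
    unfolding R_def using someI[of "\<lambda>n. inv (t [^] n) \<otimes> x \<in> H", OF that(2)] wd[OF that(1) _ that(2)] by simp
  have R2: "R (t [^] n \<otimes> h) = g [^]\<^bsub>P\<^esub> n \<otimes>\<^bsub>P\<^esub> r h" if h: "h \<in> H" for n :: nat and h
  proof -
    have e: "inv (t [^] n) \<otimes> (t [^] n \<otimes> h) = h" using t Hc[OF h] by (simp add: invl_cancel)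
    show ?thesis using Rdef[of "t [^] n \<otimes> h" n] e h t Hc[OF h] by (simp add: F_def)
  qed
  have dec: "\<exists>n h. h \<in> H \<and> x = t [^] (n::nat) \<otimes> h" if x: "x \<in> carrier G" for x
  proof -
    obtain n :: nat where n: "inv (t [^] n) \<otimes> x \<in> H" using cov[OF x] by blast
    have "x = t [^] n \<otimes> (inv (t [^] n) \<otimes> x)" using t x by (simp add: invr_cancel)
    thus ?thesis using n by blast
  qed
  have Rc: "R x \<in> carrier P" if "x \<in> carrier G" for x
    using dec[OF that] R2 rc g by auto
  have Rm: "R (x \<otimes> y) = R x \<otimes>\<^bsub>P\<^esub> R y" if x: "x \<in> carrier G" and y: "y \<in> carrier G" for x y
  proof -
    obtain n :: nat and h1 where h1: "h1 \<in> H" "x = t [^] n \<otimes> h1" using dec[OF x] by blast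
    obtain m :: nat and h2 where h2: "h2 \<in> H" "y = t [^] m \<otimes> h2" using dec[OF y] by blast
    define c where "c = inv (t [^] m) \<otimes> h1 \<otimes> t [^] m"
    have cH: "c \<in> H" and rcv: "r c = inv\<^bsub>P\<^esub> (g [^]\<^bsub>P\<^esub> m) \<otimes>\<^bsub>P\<^esub> r h1 \<otimes>\<^bsub>P\<^esub> g [^]\<^bsub>P\<^esub> m"
      using conjm[OF h1(1), of m] by (simp_all add: c_def)
    have "x \<otimes> y = t [^] (n + m) \<otimes> (c \<otimes> h2)"
      using t Hc[OF h1(1)] Hc[OF h2(1)] by (simp add: h1(2) h2(2) c_def nat_pow_mult[symmetric] m_assoc invr_cancel)
    hence "R (x \<otimes> y) = g [^]\<^bsub>P\<^esub> (n + m) \<otimes>\<^bsub>P\<^esub> (r c \<otimes>\<^bsub>P\<^esub> r h2)"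
      using R2[OF Hm[OF cH h2(1)]] rm[OF cH h2(1)] by simp
    also have "\<dots> = (g [^]\<^bsub>P\<^esub> n \<otimes>\<^bsub>P\<^esub> r h1) \<otimes>\<^bsub>P\<^esub> (g [^]\<^bsub>P\<^esub> m \<otimes>\<^bsub>P\<^esub> r h2)"
      using g rc[OF h1(1)] rc[OF h2(1)]
      by (simp add: rcv P.nat_pow_mult[symmetric] P.m_assoc P.invr_cancel)
    also have "\<dots> = R x \<otimes>\<^bsub>P\<^esub> R y" using R2 h1 h2 by simp
    finally show ?thesis .
  qed
  have "R \<in> hom G P" unfolding hom_def using Rc Rm by auto
  moreover have "\<forall>h\<in>H. R h = r h"
  proof
    fix h assume h: "h \<in> H"
    show "R h = r h" using R2[OF h, of 0] Hc[OF h] rc[OF h] by simp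
  qed
  moreover have "R t = g"
    using R2[OF H1, of 1] t g hp(1) by simp
  ultimately show ?thesis by blast
qed

lemma norm_gal: assumes x: "x \<in> absGal K" and h: "h \<in> absGal L" and xL: "x ` L = L"
  shows "x \<circ> h \<circ> inv_into UNIV x \<in> absGal L"
proof -
  have fx: "field_aut x" and fh: "field_aut h" using x h by (auto simp: absGal_def)
  have "(x \<circ> h \<circ> inv_into UNIV x) y = y" if y: "y \<in> L" for y
  proof -
    obtain z where z: "z \<in> L" "y = x z" using y xL by (metis imageE)
    have "inv_into UNIV x y = z" using z field_aut_inj[OF fx] by (simp add: inv_f_f)
    thus ?thesis using z h by (simp add: absGal_def)
  qed
  moreover have "field_aut (x \<circ> h \<circ> inv_into UNIV x)"
    using fx fh field_aut_inv[OF fx] by (simp add: field_aut_comp)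
  ultimately show ?thesis by (simp add: absGal_def)
qed

lemma cov_gal: assumes t: "t \<in> absGal K" and x: "x \<in> absGal K" and n: "\<forall>y\<in>L. x y = (t ^^ n) y"
  shows "inv_into UNIV (t ^^ n) \<circ> x \<in> absGal L"
proof -
  have ft: "field_aut (t ^^ n)" using t field_aut_funpow by (auto simp: absGal_def)
  have fx: "field_aut x" using x by (auto simp: absGal_def)
  have "(inv_into UNIV (t ^^ n) \<circ> x) y = y" if "y \<in> L" for y
    using n that field_aut_inj[OF ft] by (simp add: inv_f_f)
  thus ?thesis using field_aut_comp[OF field_aut_inv[OF ft] fx] by (simp add: absGal_def)
qed

theorem lemma1:
  fixes p :: nat and K L :: "qbar set" and r :: "(qbar \<Rightarrow> qbar) \<Rightarrow> mat2 set"
  assumes "prime p" and "p \<ge> 7"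
    and "cyclic_galois_ext L K"
    and "r \<in> hom (GalGrp L) (PGL2 p)"
    and "galois_continuous p L r"
    and "cyc_det p L r"
  shows "((\<exists>R \<in> hom (GalGrp K) (PGL2 p). \<forall>\<sigma>\<in>absGal L. R \<sigma> = r \<sigma>)
           \<longleftrightarrow> compatible_wrt p L K r)
       \<and> ((\<exists>R \<in> hom (GalGrp K) (PGL2 p). (\<forall>\<sigma>\<in>absGal L. R \<sigma> = r \<sigma>) \<and> cyc_det p K R)
           \<longleftrightarrow> strongly_compatible_wrt p L K r)"
proof -
  interpret pp p using assms(1,2) by unfold_locales auto
  have KL: "K \<subseteq> L" and Linv: "\<forall>\<sigma>\<in>absGal K. \<sigma> ` L = L"
    using assms(3) by (auto simp: cyclic_galois_ext_def)
  obtain t where t: "t \<in> absGal K" and cyc: "\<forall>\<sigma>\<in>absGal K. \<exists>n. \<forall>x\<in>L. \<sigma> x = (t ^^ n) x"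
    using assms(3) by (auto simp: cyclic_galois_ext_def)
  interpret G: group "GalGrp K" by (rule group_Gal)
  interpret PG: group "PGL2 p" by (rule group_PGL2)
  have HK: "absGal L \<subseteq> absGal K" using absGal_mono[OF KL] .
  have Hsub: "subgroup (absGal L) (GalGrp K)"
  proof (rule G.subgroupI)
    show "absGal L \<subseteq> carrier (GalGrp K)" using HK by simp
    show "absGal L \<noteq> {}" using absGal_id by blast
    fix a b assume a: "a \<in> absGal L"
    show "inv\<^bsub>GalGrp K\<^esub> a \<in> absGal L" using inv_Gal[of a K] a HK absGal_inv[OF a] by auto
    assume "b \<in> absGal L"
    thus "a \<otimes>\<^bsub>GalGrp K\<^esub> b \<in> absGal L" using a absGal_comp by simp
  qed
  have norm: "x \<otimes>\<^bsub>GalGrp K\<^esub> h \<otimes>\<^bsub>GalGrp K\<^esub> inv\<^bsub>GalGrp K\<^esub> x \<in> absGal L"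
    if "x \<in> carrier (GalGrp K)" "h \<in> absGal L" for x h
    using that norm_gal[of x K h L] Linv inv_Gal[of x K] by simp
  have tc: "t \<in> carrier (GalGrp K)" using t by simp
  have cov: "\<exists>n::nat. inv\<^bsub>GalGrp K\<^esub> (t [^]\<^bsub>GalGrp K\<^esub> n) \<otimes>\<^bsub>GalGrp K\<^esub> x \<in> absGal L"
    if x: "x \<in> carrier (GalGrp K)" for x
  proof -
    obtain n where n: "\<forall>y\<in>L. x y = (t ^^ n) y" using cyc x by auto
    have "inv\<^bsub>GalGrp K\<^esub> (t [^]\<^bsub>GalGrp K\<^esub> n) = inv_into UNIV (t ^^ n)"
      using inv_Gal[OF absGal_funpow[OF t, of n]] by (simp add: pow_Gal)
    hence "inv\<^bsub>GalGrp K\<^esub> (t [^]\<^bsub>GalGrp K\<^esub> n) \<otimes>\<^bsub>GalGrp K\<^esub> x \<in> absGal L"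
      using cov_gal[OF t _ n] x by simp
    thus ?thesis by blast
  qed
  have rc: "r h \<in> carrier (PGL2 p)" if "h \<in> absGal L" for h
    using assms(4) that by (auto simp: hom_def GalGrp_def)
  have rm: "r (h \<otimes>\<^bsub>GalGrp K\<^esub> h') = r h \<otimes>\<^bsub>PGL2 p\<^esub> r h'" if "h \<in> absGal L" "h' \<in> absGal L" for h h'
    using assms(4) that by (auto simp: hom_def GalGrp_def)
  have dprops: "0 < dtau L s \<and> s ^^ dtau L s \<in> absGal L \<and> (\<forall>j. 0 < j \<and> j < dtau L s \<longrightarrow> s ^^ j \<notin> absGal L)"
    if s: "s \<in> absGal K" for s
  proof -
    obtain D :: nat where D: "D > 0" "s [^]\<^bsub>GalGrp K\<^esub> D \<in> absGal L"
      using G.fin_index[OF Hsub norm tc cov] s by auto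
    hence ex: "\<exists>d. 0 < d \<and> s ^^ d \<in> absGal L" by (auto simp: pow_Gal)
    have "0 < dtau L s \<and> s ^^ dtau L s \<in> absGal L"
      unfolding dtau_def by (rule LeastI_ex[OF ex])
    moreover have "\<forall>j. 0 < j \<and> j < dtau L s \<longrightarrow> s ^^ j \<notin> absGal L"
      unfolding dtau_def using not_less_Least by blast
    ultimately show ?thesis by blast
  qed
  have EXT: "\<exists>R\<in>hom (GalGrp K) (PGL2 p). (\<forall>h\<in>absGal L. R h = r h) \<and> R t = g"
    if g: "g \<in> carrier (PGL2 p)"
      and cj: "\<forall>\<sigma>\<in>absGal L. r (t \<circ> \<sigma> \<circ> inv_into UNIV t) = g \<otimes>\<^bsub>PGL2 p\<^esub> r \<sigma> \<otimes>\<^bsub>PGL2 p\<^esub> inv\<^bsub>PGL2 p\<^esub> g"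
      and rd: "r (t ^^ dtau L t) = g [^]\<^bsub>PGL2 p\<^esub> dtau L t" for g
  proof -
    have conj: "r (t \<otimes>\<^bsub>GalGrp K\<^esub> h \<otimes>\<^bsub>GalGrp K\<^esub> inv\<^bsub>GalGrp K\<^esub> t) = g \<otimes>\<^bsub>PGL2 p\<^esub> r h \<otimes>\<^bsub>PGL2 p\<^esub> inv\<^bsub>PGL2 p\<^esub> g"
      if h: "h \<in> absGal L" for h
      using cj h inv_Gal[OF t] by (simp add: comp_assoc)
    have dp: "0 < dtau L t" "t [^]\<^bsub>GalGrp K\<^esub> dtau L t \<in> absGal L"
      "\<And>j. 0 < j \<Longrightarrow> j < dtau L t \<Longrightarrow> t [^]\<^bsub>GalGrp K\<^esub> j \<notin> absGal L"
      using dprops[OF t] by (auto simp: pow_Gal)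
    have rd': "r (t [^]\<^bsub>GalGrp K\<^esub> dtau L t) = g [^]\<^bsub>PGL2 p\<^esub> dtau L t" using rd by (simp add: pow_Gal)
    have pw: "r (t [^]\<^bsub>GalGrp K\<^esub> k) = g [^]\<^bsub>PGL2 p\<^esub> k" if "t [^]\<^bsub>GalGrp K\<^esub> (k::nat) \<in> absGal L" for k
      using G.pw_from_min[OF Hsub group_PGL2 tc dp(1,2) dp(3) rc rm g rd' that] by blast
    show ?thesis using G.ext_lemma[OF group_PGL2 Hsub norm tc cov rc rm g conj pw] by blast
  qed
  have FWD: "g \<in> carrier (PGL2 p) \<and> (\<forall>\<sigma>\<in>absGal L. r (s \<circ> \<sigma> \<circ> inv_into UNIV s) = g \<otimes>\<^bsub>PGL2 p\<^esub> r \<sigma> \<otimes>\<^bsub>PGL2 p\<^esub> inv\<^bsub>PGL2 p\<^esub> g)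
      \<and> r (s ^^ dtau L s) = g [^]\<^bsub>PGL2 p\<^esub> dtau L s"
    if R: "R \<in> hom (GalGrp K) (PGL2 p)" and RH: "\<forall>\<sigma>\<in>absGal L. R \<sigma> = r \<sigma>" and s: "s \<in> absGal K"
      and gdef: "g = R s" for R s g
  proof -
    interpret RH: group_hom "GalGrp K" "PGL2 p" R by (intro group_hom.intro group_hom_axioms.intro group_Gal group_PGL2 R)
    have "g \<in> carrier (PGL2 p)" using s gdef by simp
    moreover have "r (s \<circ> \<sigma> \<circ> inv_into UNIV s) = g \<otimes>\<^bsub>PGL2 p\<^esub> r \<sigma> \<otimes>\<^bsub>PGL2 p\<^esub> inv\<^bsub>PGL2 p\<^esub> g"
      if sg: "\<sigma> \<in> absGal L" for \<sigma>
    proof -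
      have m: "s \<circ> \<sigma> \<circ> inv_into UNIV s = s \<otimes>\<^bsub>GalGrp K\<^esub> \<sigma> \<otimes>\<^bsub>GalGrp K\<^esub> inv\<^bsub>GalGrp K\<^esub> s"
        using inv_Gal[OF s] by (simp add: comp_assoc)
      have "s \<circ> \<sigma> \<circ> inv_into UNIV s \<in> absGal L" using norm[of s \<sigma>] s sg m by simp
      hence "r (s \<circ> \<sigma> \<circ> inv_into UNIV s) = R (s \<otimes>\<^bsub>GalGrp K\<^esub> \<sigma> \<otimes>\<^bsub>GalGrp K\<^esub> inv\<^bsub>GalGrp K\<^esub> s)"
        using RH m by simp
      also have "\<dots> = g \<otimes>\<^bsub>PGL2 p\<^esub> r \<sigma> \<otimes>\<^bsub>PGL2 p\<^esub> inv\<^bsub>PGL2 p\<^esub> g"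
      proof -
        have sc: "s \<in> carrier (GalGrp K)" and sgc: "\<sigma> \<in> carrier (GalGrp K)" using s sg HK by auto
        have "R (s \<otimes>\<^bsub>GalGrp K\<^esub> \<sigma> \<otimes>\<^bsub>GalGrp K\<^esub> inv\<^bsub>GalGrp K\<^esub> s)
            = R s \<otimes>\<^bsub>PGL2 p\<^esub> R \<sigma> \<otimes>\<^bsub>PGL2 p\<^esub> inv\<^bsub>PGL2 p\<^esub> R s"
          using sc sgc by (simp only: RH.hom_mult G.m_closed G.inv_closed RH.hom_inv)
        thus ?thesis using RH sg gdef by simp
      qed
      finally show ?thesis .
    qed
    moreover have "r (s ^^ dtau L s) = g [^]\<^bsub>PGL2 p\<^esub> dtau L s"
    proof -
      have "s ^^ dtau L s \<in> absGal L" using dprops[OF s] by blast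
      hence "r (s ^^ dtau L s) = R (s [^]\<^bsub>GalGrp K\<^esub> dtau L s)" using RH by (simp add: pow_Gal)
      also have "\<dots> = g [^]\<^bsub>PGL2 p\<^esub> dtau L s" using RH.hom_nat_pow s gdef by simp
      finally show ?thesis .
    qed
    ultimately show ?thesis by blast
  qed
  show ?thesis
  proof (intro conjI iffI)
    assume "\<exists>R\<in>hom (GalGrp K) (PGL2 p). \<forall>\<sigma>\<in>absGal L. R \<sigma> = r \<sigma>"
    then obtain R where R: "R \<in> hom (GalGrp K) (PGL2 p)" "\<forall>\<sigma>\<in>absGal L. R \<sigma> = r \<sigma>" by blast
    show "compatible_wrt p L K r" unfolding compatible_wrt_def
    proof
      fix s assume s: "s \<in> absGal K"
      show "\<exists>g\<in>carrier (PGL2 p). (\<forall>\<sigma>\<in>absGal L. r (s \<circ> \<sigma> \<circ> inv_into UNIV s) = g \<otimes>\<^bsub>PGL2 p\<^esub> r \<sigma> \<otimes>\<^bsub>PGL2 p\<^esub> inv\<^bsub>PGL2 p\<^esub> g)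
          \<and> r (s ^^ dtau L s) = g [^]\<^bsub>PGL2 p\<^esub> dtau L s"
        using FWD[OF R s refl] by blast
    qed
  next
    assume "compatible_wrt p L K r"
    then obtain g where g: "g \<in> carrier (PGL2 p)"
      "\<forall>\<sigma>\<in>absGal L. r (t \<circ> \<sigma> \<circ> inv_into UNIV t) = g \<otimes>\<^bsub>PGL2 p\<^esub> r \<sigma> \<otimes>\<^bsub>PGL2 p\<^esub> inv\<^bsub>PGL2 p\<^esub> g"
      "r (t ^^ dtau L t) = g [^]\<^bsub>PGL2 p\<^esub> dtau L t"
      using t unfolding compatible_wrt_def by blast
    show "\<exists>R\<in>hom (GalGrp K) (PGL2 p). \<forall>\<sigma>\<in>absGal L. R \<sigma> = r \<sigma>" using EXT[OF g] by blast
  next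
    assume "\<exists>R\<in>hom (GalGrp K) (PGL2 p). (\<forall>\<sigma>\<in>absGal L. R \<sigma> = r \<sigma>) \<and> cyc_det p K R"
    then obtain R where R: "R \<in> hom (GalGrp K) (PGL2 p)" "\<forall>\<sigma>\<in>absGal L. R \<sigma> = r \<sigma>" "cyc_det p K R" by blast
    show "strongly_compatible_wrt p L K r" unfolding strongly_compatible_wrt_def
    proof
      fix s assume s: "s \<in> absGal K"
      have "pdet p (R s) = cyc_pr p s" using R(3) s by (simp add: cyc_det_def)
      thus "\<exists>g\<in>carrier (PGL2 p). (\<forall>\<sigma>\<in>absGal L. r (s \<circ> \<sigma> \<circ> inv_into UNIV s) = g \<otimes>\<^bsub>PGL2 p\<^esub> r \<sigma> \<otimes>\<^bsub>PGL2 p\<^esub> inv\<^bsub>PGL2 p\<^esub> g)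
          \<and> pdet p g = cyc_pr p s \<and> r (s ^^ dtau L s) = g [^]\<^bsub>PGL2 p\<^esub> dtau L s"
        using FWD[OF R(1,2) s refl] by blast
    qed
  next
    assume "strongly_compatible_wrt p L K r"
    then obtain g where g: "g \<in> carrier (PGL2 p)"
      "\<forall>\<sigma>\<in>absGal L. r (t \<circ> \<sigma> \<circ> inv_into UNIV t) = g \<otimes>\<^bsub>PGL2 p\<^esub> r \<sigma> \<otimes>\<^bsub>PGL2 p\<^esub> inv\<^bsub>PGL2 p\<^esub> g"
      "pdet p g = cyc_pr p t"
      "r (t ^^ dtau L t) = g [^]\<^bsub>PGL2 p\<^esub> dtau L t"
      using t unfolding strongly_compatible_wrt_def by blast
    obtain R where R: "R \<in> hom (GalGrp K) (PGL2 p)" "\<forall>h\<in>absGal L. R h = r h" "R t = g"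
      using EXT[OF g(1,2,4)] by blast
    interpret RH: group_hom "GalGrp K" "PGL2 p" R by (intro group_hom.intro group_hom_axioms.intro group_Gal group_PGL2 R(1))
    have "cyc_det p K R" unfolding cyc_det_def
    proof
      fix x assume x: "x \<in> absGal K"
      obtain n :: nat where n: "inv\<^bsub>GalGrp K\<^esub> (t [^]\<^bsub>GalGrp K\<^esub> n) \<otimes>\<^bsub>GalGrp K\<^esub> x \<in> absGal L"
        using cov x by auto
      define h where "h = inv\<^bsub>GalGrp K\<^esub> (t [^]\<^bsub>GalGrp K\<^esub> n) \<otimes>\<^bsub>GalGrp K\<^esub> x"
      have hL: "h \<in> absGal L" using n h_def by simp
      have hK: "h \<in> absGal K" using hL HK by auto
      have xe: "x = t [^]\<^bsub>GalGrp K\<^esub> n \<otimes>\<^bsub>GalGrp K\<^esub> h"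
      proof -
        have xc: "x \<in> carrier (GalGrp K)" using x by simp
        show ?thesis unfolding h_def using G.invr_cancel[OF G.nat_pow_closed[OF tc] xc] by (rule sym)
      qed
      have "R x = g [^]\<^bsub>PGL2 p\<^esub> n \<otimes>\<^bsub>PGL2 p\<^esub> r h"
      proof -
        have hc: "h \<in> carrier (GalGrp K)" using hK by simp
        have "R x = R (t [^]\<^bsub>GalGrp K\<^esub> n) \<otimes>\<^bsub>PGL2 p\<^esub> R h"
          unfolding xe by (rule RH.hom_mult[OF G.nat_pow_closed[OF tc] hc])
        thus ?thesis using RH.hom_nat_pow[OF tc, of n] R(2,3) hL by simp
      qed
      hence "pdet p (R x) = pdet p g ^ n * pdet p (r h)"
        using g(1) rc[OF hL] by (simp add: pdet_mult pdet_pow)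
      also have "\<dots> = cyc_pr p t ^ n * cyc_pr p h" using g(3) assms(6) hL by (simp add: cyc_det_def)
      also have "\<dots> = cyc_pr p (t ^^ n \<circ> h)"
        using t hK by (simp add: absGal_def cyc_mult cyc_funpow field_aut_funpow)
      also have "t ^^ n \<circ> h = x" using xe by (simp add: pow_Gal)
      finally show "pdet p (R x) = cyc_pr p x" .
    qed
    thus "\<exists>R\<in>hom (GalGrp K) (PGL2 p). (\<forall>\<sigma>\<in>absGal L. R \<sigma> = r \<sigma>) \<and> cyc_det p K R" using R by blast
  qed
qed

end
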